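(* Let $s,t$ be real numbers. For every integer $n \geq 3$, $$\det W_n = \Big\lfloor \frac{n-1}{2}\Big\rfloor (-s)^{n-3}t^3 - s\det W_{n-1}.$$
   Context: All matrices below are $n\times n$ upper Hessenberg with subdiagonal entries $a_{i+1,i}=s$ and $a_{ij}=0$ for $i>j+1$; only the entries $a_{ij}$ with $i\le j$ are specified. For $n = 2k+1$ ($k\ge 1$), $W_n$ has: $a_{1j}=t$ for $1\le j\le k$, $a_{1j}=0$ for $k+1\le j\le 2k$, $a_{1n}=t$; for $2\le i\le k+1$: $a_{ij}=0$ for $i\le j\le k$, $a_{ij}=t$ for $k+1\le j\le 2k$, $a_{in}=0$; for $k+2\le i\le n$: $a_{ij}=0$ for $i\le j\le 2k$, $a_{in}=t$. For $n=2k+2$ ($k\ge 0$), $W_n$ has: $a_{1j}=t$ for $1\le j\le k$, $a_{1j}=0$ for $k+1\le j\le 2k+1$, $a_{1n}=t$; for $2\le i\le k+1$: $a_{ij}=0$ for $i\le j\le k$, $a_{ij}=t$ for $k+1\le j\le 2k+1$, $a_{in}=0$; for $k+2\le i\le n$: $a_{ij}=0$ for $i\le j\le 2k+1$, $a_{in}=t$. *)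

theory Defs
  imports "Jordan_Normal_Form.Determinant"
begin

(* Entry a_{ij} of W_n, with 1-based indices i, j in {1..n}.
   For both n = 2k+1 and n = 2k+2 the parameter k equals (n-1) div 2,
   and the column ranges "k+1..2k" (odd case) / "k+1..2k+1" (even case)
   are both "k+1..n-1". *)
definition W_entry :: "nat \<Rightarrow> real \<Rightarrow> real \<Rightarrow> nat \<Rightarrow> nat \<Rightarrow> real" where
  "W_entry n s t i j =
    (let k = (n - 1) div 2 in
     if i > j + 1 then 0
     else if i = j + 1 then s
     else if i = 1 then (if j = n then t else if j \<le> k then t else 0)
     else if i \<le> k + 1 then (if j = n then 0 else if j \<le> k then 0 else t)
     else (if j = n then t else 0))"

(* W_n as an n x n matrix (Jordan_Normal_Form matrices are 0-indexed). *)
definition W :: "nat \<Rightarrow> real \<Rightarrow> real \<Rightarrow> real mat" where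
  "W n s t = mat n n (\<lambda>(i, j). W_entry n s t (i + 1) (j + 1))"

end

theory Submission
  imports Defs
begin

definition Hb :: "nat \<Rightarrow> (nat \<Rightarrow> real) \<Rightarrow> (nat \<Rightarrow> nat \<Rightarrow> real) \<Rightarrow> real \<Rightarrow> real mat" where
  "Hb n b a s = mat n n (\<lambda>(i,j). if i = 0 then b j else if i > j+1 then 0 else if i = j+1 then s else a i j)"

lemma Hb_carrier: "Hb n b a s \<in> carrier_mat n n" unfolding Hb_def by auto

lemma first_block:
  "n \<ge> 1 \<Longrightarrow> det (Hb n b a s) = (\<Sum>j<n. (-s)^j * b j *
     det (Hb (n-j-1) (\<lambda>l. a (j+1) (l+j+1)) (\<lambda>i l. a (i+j+1) (l+j+1)) s))"
proof (induction n arbitrary: b a)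
  case 0 then show ?case by simp
next
  case (Suc n)
  show ?case
  proof (cases n)
    case 0
    have z: "det (mat_delete (Hb 1 b a s) 0 0) = 1"
      by (rule det_dim_zero) (auto simp: mat_delete_def Hb_def)
    have e: "Hb 1 b a s $$ (0,0) = b 0" by (simp add: Hb_def)
    have "det (Hb 1 b a s) = (\<Sum>i<1. Hb 1 b a s $$ (i,0) * cofactor (Hb 1 b a s) i 0)"
      by (rule laplace_expansion_column[OF Hb_carrier]) simp
    also have "\<dots> = b 0" by (simp add: cofactor_def z e del: One_nat_def) simp
    finally have "det (Hb 1 b a s) = b 0" .
    then show ?thesis using 0 by (simp add: Hb_carrier)
  next
    case (Suc m)
    let ?A = "Hb (Suc n) b a s"
    have d0: "mat_delete ?A 0 0 = Hb n (\<lambda>l. a 1 (l+1)) (\<lambda>i l. a (i+1) (l+1)) s"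
      by (rule eq_matI) (auto simp: Hb_def mat_delete_def)
    have d1: "mat_delete ?A 1 0 = Hb n (\<lambda>l. b (l+1)) (\<lambda>i l. a (i+1) (l+1)) s"
      by (rule eq_matI) (auto simp: Hb_def mat_delete_def)
    have IH: "det (Hb n (\<lambda>l. b (l+1)) (\<lambda>i l. a (i+1) (l+1)) s) = (\<Sum>j<n. (-s)^j * b (j+1) *
     det (Hb (n-j-1) (\<lambda>l. a (j+2) (l+j+2)) (\<lambda>i l. a (i+j+2) (l+j+2)) s))"
      using Suc.IH[of "\<lambda>l. b (l+1)" "\<lambda>i l. a (i+1) (l+1)"] Suc by (simp add: add.assoc)
    have "det ?A = (\<Sum>i<Suc n. ?A $$ (i,0) * cofactor ?A i 0)"
      by (rule laplace_expansion_column[OF Hb_carrier]) simp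
    also have "\<dots> = (\<Sum>i\<in>{0,1}. ?A $$ (i,0) * cofactor ?A i 0)"
      by (rule sum.mono_neutral_right) (auto simp: Hb_def Suc)
    also have "\<dots> = b 0 * det (mat_delete ?A 0 0) - s * det (mat_delete ?A 1 0)"
      by (simp add: Hb_def Suc cofactor_def)
    also have "\<dots> = b 0 * det (Hb n (\<lambda>l. a 1 (l+1)) (\<lambda>i l. a (i+1) (l+1)) s)
       + (\<Sum>j<n. (-s)^(Suc j) * b (Suc j) *
     det (Hb (n-j-1) (\<lambda>l. a (j+2) (l+j+2)) (\<lambda>i l. a (i+j+2) (l+j+2)) s))"
      unfolding d0 d1 IH by (simp add: sum_distrib_left algebra_simps sum_negf)
    also have "\<dots> = (\<Sum>j<Suc n. (-s)^j * b j *
     det (Hb (Suc n-j-1) (\<lambda>l. a (j+1) (l+j+1)) (\<lambda>i l. a (i+j+1) (l+j+1)) s))"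
      by (subst sum.lessThan_Suc_shift) (simp add: add.assoc)
    finally show ?thesis .
  qed
qed
lemma det_Hb0: "det (Hb 0 b a s) = 1" by (rule det_dim_zero[OF Hb_carrier])

lemma last_col:
  assumes q: "q \<ge> 1" and b: "\<And>m. m < q \<Longrightarrow> b m = (if m = q-1 then t else 0)"
  shows "det (Hb q b a s) = (-s)^(q-1) * t"
proof -
  have "det (Hb q b a s) = (\<Sum>j<q. (-s)^j * b j *
     det (Hb (q-j-1) (\<lambda>l. a (j+1) (l+j+1)) (\<lambda>i l. a (i+j+1) (l+j+1)) s))"
    by (rule first_block[OF q])
  also have "\<dots> = (\<Sum>j<q. if j = q-1 then (-s)^(q-1) * t else 0)"
    by (rule sum.cong) (auto simp: b det_Hb0)
  also have "\<dots> = (-s)^(q-1) * t" using q by simp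
  finally show ?thesis .
qed

definition Wa where "Wa n s t = (\<lambda>i j. W_entry n s t (i+1) (j+1))"

lemma W_Hb: "W n s t = Hb n (Wa n s t 0) (Wa n s t) s"
  by (rule eq_matI) (auto simp: W_def Hb_def Wa_def W_entry_def Let_def)

lemma middle:
  assumes k: "k = (n - 1) div 2" and jk: "j < k"
  shows "det (Hb (n-j-1) (\<lambda>l. Wa n s t (j+1) (l+j+1)) (\<lambda>i l. Wa n s t (i+j+1) (l+j+1)) s)
     = real (n-1-k) * (-s)^(n-j-3) * t^2"
proof -
  let ?a = "Wa n s t"
  have n3: "n \<ge> 3" "2*k \<le> n-1" "n-1 \<le> 2*k+1" using k jk by auto
  have p: "n-j-1 \<ge> 1" using n3 jk by auto
  have "det (Hb (n-j-1) (\<lambda>l. ?a (j+1) (l+j+1)) (\<lambda>i l. ?a (i+j+1) (l+j+1)) s)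
    = (\<Sum>l<n-j-1. (-s)^l * ?a (j+1) (l+j+1) *
     det (Hb (n-j-1-l-1) (\<lambda>m. ?a (l+1+j+1) (m+l+1+j+1)) (\<lambda>i m. ?a (i+l+1+j+1) (m+l+1+j+1)) s))"
    by (subst first_block[OF p]) (simp add: add.assoc)
  also have "\<dots> = (\<Sum>l<n-j-1. if k-1-j \<le> l \<and> l \<le> n-3-j then (-s)^(n-j-3)*t^2 else 0)"
  proof (rule sum.cong[OF refl])
    fix l assume l: "l \<in> {..<n-j-1}"
    show "(-s)^l * ?a (j+1) (l+j+1) *
     det (Hb (n-j-1-l-1) (\<lambda>m. ?a (l+1+j+1) (m+l+1+j+1)) (\<lambda>i m. ?a (i+l+1+j+1) (m+l+1+j+1)) s)
      = (if k-1-j \<le> l \<and> l \<le> n-3-j then (-s)^(n-j-3)*t^2 else 0)"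
    proof (cases "k-1-j \<le> l \<and> l \<le> n-3-j")
      case True
      have e1: "?a (j+1) (l+j+1) = t" using True l n3 jk by (auto simp: Wa_def W_entry_def Let_def k[symmetric])
      have q: "n-j-1-l-1 \<ge> 1" using True n3 jk by auto
      have "det (Hb (n-j-1-l-1) (\<lambda>m. ?a (l+1+j+1) (m+l+1+j+1)) (\<lambda>i m. ?a (i+l+1+j+1) (m+l+1+j+1)) s)
          = (-s)^(n-j-1-l-1-1) * t"
        by (rule last_col[OF q]) (use True n3 jk in \<open>auto simp: Wa_def W_entry_def Let_def k[symmetric]\<close>)
      moreover have "l + (n-j-1-l-1-1) = n-j-3" using True n3 jk by auto
      ultimately show ?thesis using True e1
        by (simp add: power2_eq_square) (metis (no_types, lifting) mult.commute mult.left_commute power_add)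
    next
      case False
      have e1: "?a (j+1) (l+j+1) = 0" using False l n3 jk by (auto simp: Wa_def W_entry_def Let_def k[symmetric])
      show ?thesis by (simp only: e1 if_not_P[OF False])
    qed
  qed
  also have "\<dots> = real (card {k-1-j..n-3-j}) * ((-s)^(n-j-3)*t^2)"
  proof -
    have "{l \<in> {..<n-j-1}. k-1-j \<le> l \<and> l \<le> n-3-j} = {k-1-j..n-3-j}" using n3 jk by auto
    then show ?thesis
      by (subst sum.inter_filter[symmetric, of "{..<n-j-1}"]) (simp_all only: finite_lessThan, simp)
  qed
  also have "card {k-1-j..n-3-j} = n-1-k" using n3 jk by simp
  finally show ?thesis by simp
qed

lemma closed_form:
  assumes n: "n \<ge> 2" and k: "k = (n - 1) div 2"
  shows "det (W n s t) = (-s)^(n-1)*t + real (k*(n-1-k)) * (-s)^(n-3) * t^3"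
proof -
  let ?a = "Wa n s t"
  have n3: "2*k \<le> n-1" "n-1 \<le> 2*k+1" using k by auto
  have n1: "n \<ge> 1" using n by simp
  have kk: "(n - Suc 0) div 2 = k" using k by simp
  have "det (W n s t) = (\<Sum>j<n. (-s)^j * ?a 0 j *
     det (Hb (n-j-1) (\<lambda>l. ?a (j+1) (l+j+1)) (\<lambda>i l. ?a (i+j+1) (l+j+1)) s))"
    unfolding W_Hb by (rule first_block[OF n1])
  also have "\<dots> = (\<Sum>j<n. (if j = n-1 then (-s)^(n-1)*t else 0)
      + (if j < k then real (n-1-k) * (-s)^(n-3) * t^3 else 0))"
  proof (rule sum.cong[OF refl])
    fix j assume j: "j \<in> {..<n}"
    show "(-s)^j * ?a 0 j *
     det (Hb (n-j-1) (\<lambda>l. ?a (j+1) (l+j+1)) (\<lambda>i l. ?a (i+j+1) (l+j+1)) s) =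
      (if j = n-1 then (-s)^(n-1)*t else 0)
      + (if j < k then real (n-1-k) * (-s)^(n-3) * t^3 else 0)"
    proof -
      consider "j = n-1" | "j < k" | "j \<noteq> n-1" "\<not> j < k" by auto
      then show ?thesis
      proof cases
        case 1
        have "?a 0 j = t" using 1 n by (simp add: Wa_def W_entry_def Let_def)
        moreover have "\<not> j < k" using 1 n3 n by auto
        ultimately show ?thesis using 1 n by (simp add: det_Hb0)
      next
        case 2
        have "?a 0 j = t" using 2 n by (auto simp add: Wa_def W_entry_def Let_def k[symmetric] kk)
        moreover have "j \<noteq> n-1" using 2 n3 by auto
        moreover have "j + (n-j-3) = n-3" using 2 n3 by auto
        ultimately show ?thesis using 2 middle[OF k 2, of s t]
          by (simp add: power_add power3_eq_cube power2_eq_square) (metis (no_types, lifting) mult.commute mult.left_commute power_add)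
      next
        case 3
        have "?a 0 j = 0" using 3 j n by (auto simp add: Wa_def W_entry_def Let_def k[symmetric] kk)
        then show ?thesis using 3 by simp
      qed
    qed
  qed
  also have "\<dots> = (-s)^(n-1)*t + real (k*(n-1-k)) * (-s)^(n-3) * t^3"
  proof -
    have A: "(\<Sum>j<n. (if j = n-1 then (-s)^(n-1)*t else 0)) = (-s)^(n-1)*t" using n by simp
    have S: "{j \<in> {..<n}. j < k} = {..<k}" using n3 n by auto
    have B: "(\<Sum>j<n. (if j < k then real (n-1-k) * (-s)^(n-3) * t^3 else 0)) = real k * (real (n-1-k) * (-s)^(n-3) * t^3)"
      by (subst sum.inter_filter[symmetric, of "{..<n}"]) (simp_all only: finite_lessThan S, simp)
    show ?thesis by (simp only: sum.distrib A B) simp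
  qed
  finally show ?thesis .
qed


lemma count_id:
  fixes n :: nat
  assumes "n \<ge> 3"
  shows "((n-1) div 2)*(n-1-(n-1) div 2) = (n-1) div 2 + ((n-1-1) div 2)*(n-1-1-(n-1-1) div 2)"
proof -
  define k where "k = (n-3) div 2"
  have "n = 2*k+3 \<or> n = 2*k+4" using assms unfolding k_def by presburger
  then show ?thesis
  proof (elim disjE)
    assume n: "n = 2*k+3"
    have a: "(n-1) div 2 = k+1" "(n-1-1) div 2 = k" "n-1 = 2*k+2" "n-1-1 = 2*k+1" using n by auto
    show ?thesis unfolding a by (simp add: algebra_simps)
  next
    assume n: "n = 2*k+4"
    have a: "(n-1) div 2 = k+1" "(n-1-1) div 2 = k+1" "n-1 = 2*k+3" "n-1-1 = 2*k+2" using n by auto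
    show ?thesis unfolding a by (simp add: algebra_simps)
  qed
qed

theorem proposition5p4:
  fixes s t :: real and n :: nat
  assumes "n \<ge> 3"
  shows "det (W n s t) =
    of_int \<lfloor>(real n - 1) / 2\<rfloor> * (- s) ^ (n - 3) * t ^ 3 - s * det (W (n - 1) s t)"
proof -
  define k where "k = (n-1) div 2"
  define k' where "k' = (n-1-1) div 2"
  have fl: "\<lfloor>(real n - 1) / 2\<rfloor> = int k"
  proof -
    have h: "(real n - 1) / 2 = real (n-1) / real (2::nat)" using assms by simp
    show ?thesis unfolding h k_def by (rule floor_divide_of_nat_eq)
  qed
  have c1: "det (W n s t) = (-s)^(n-1)*t + real (k*(n-1-k)) * (-s)^(n-3) * t^3"
    by (rule closed_form) (use assms k_def in auto)
  have c2: "det (W (n-1) s t) = (-s)^(n-1-1)*t + real (k'*(n-1-1-k')) * (-s)^(n-1-3) * t^3"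
    by (rule closed_form) (use assms k'_def in auto)
  have ci: "k*(n-1-k) = k + k'*(n-1-1-k')" unfolding k_def k'_def by (rule count_id[OF assms])
  obtain m where m: "n = m + 3" using assms by (metis add.commute le_Suc_ex)
  show ?thesis
  proof (cases m)
    case 0
    then have "k = 1" "k' = 0" using m k_def k'_def by auto
    then show ?thesis unfolding c1 c2 fl using m 0 by (simp add: power2_eq_square power3_eq_cube)
  next
    case (Suc m')
    have e1: "(-s)^(n-1) = - s * (-s)^(n-1-1)" using m by simp
    have e2: "(-s)^(n-3) = - s * (-s)^(n-1-3)" using m Suc by simp
    have H: "real (k*(n-1-k)) = real k + real (k'*(n-1-1-k'))" unfolding ci by simp
    show ?thesis unfolding c1 c2 fl e1 e2 H by (simp add: algebra_simps)
  qed
qed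

end
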